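(* Let $G$ be a $B_2$-EPG graph given with a representation and let $X$ be a clique of $G$. Then either there is a set of at most three rows such that every U-vertex of $X$ intersects one of these rows, or there is a set of at most three columns such that every Z-vertex of $X$ intersects one of these columns.
   Context: A graph $G$ is a $B_k$-EPG graph if each vertex $u$ can be assigned a path $P_u$ in the planar orthogonal grid with at most $k$ bends such that $uv\in E(G)$ iff $P_u$ and $P_v$ share at least one grid edge (a representation); for $B_2$-EPG graphs one assumes w.l.o.g. every path has exactly two bends, so every vertex is a Z-vertex or a U-vertex. A vertex $u$ intersects a row (column) if $P_u$ contains a grid edge of it. A Z-vertex intersects exactly two rows and one column; a U-vertex intersects exactly one row and two columns. *)

theory Defs
  imports Main
begin

text \<open>HE x y is the horizontal unit edge from (x,y) to (x+1,y), lying on row y;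
  VE x y is the vertical unit edge from (x,y) to (x,y+1), lying on column x.\<close>
datatype gedge = HE int int | VE int int

definition hseg :: "int \<Rightarrow> int \<Rightarrow> int \<Rightarrow> gedge set" where
  "hseg a b y = {HE x y | x. min a b \<le> x \<and> x < max a b}"

definition vseg :: "int \<Rightarrow> int \<Rightarrow> int \<Rightarrow> gedge set" where
  "vseg x a b = {VE x y | y. min a b \<le> y \<and> y < max a b}"

text \<open>ZPath x1 y1 x2 y2 x3: (x1,y1) -- horizontal --> (x2,y1) -- vertical --> (x2,y2)
     -- horizontal --> (x3,y2)   (a Z-vertex path: two rows, one column).
  UPath x1 y1 x2 y2 y3: (x1,y1) -- vertical --> (x1,y2) -- horizontal --> (x2,y2)
     -- vertical --> (x2,y3)     (a U-vertex path: one row, two columns).\<close>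
datatype path2 = ZPath int int int int int | UPath int int int int int

fun valid_path2 :: "path2 \<Rightarrow> bool" where
  "valid_path2 (ZPath x1 y1 x2 y2 x3) \<longleftrightarrow> x1 \<noteq> x2 \<and> y1 \<noteq> y2 \<and> x2 \<noteq> x3"
| "valid_path2 (UPath x1 y1 x2 y2 y3) \<longleftrightarrow> y1 \<noteq> y2 \<and> x1 \<noteq> x2 \<and> y2 \<noteq> y3"

fun edges :: "path2 \<Rightarrow> gedge set" where
  "edges (ZPath x1 y1 x2 y2 x3) = hseg x1 x2 y1 \<union> vseg x2 y1 y2 \<union> hseg x2 x3 y2"
| "edges (UPath x1 y1 x2 y2 y3) = vseg x1 y1 y2 \<union> hseg x1 x2 y2 \<union> vseg x2 y2 y3"

fun is_Z :: "path2 \<Rightarrow> bool" where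
  "is_Z (ZPath _ _ _ _ _) = True"
| "is_Z (UPath _ _ _ _ _) = False"

fun is_U :: "path2 \<Rightarrow> bool" where
  "is_U (ZPath _ _ _ _ _) = False"
| "is_U (UPath _ _ _ _ _) = True"

definition intersects_row :: "path2 \<Rightarrow> int \<Rightarrow> bool" where
  "intersects_row p y \<longleftrightarrow> (\<exists>x. HE x y \<in> edges p)"

definition intersects_col :: "path2 \<Rightarrow> int \<Rightarrow> bool" where
  "intersects_col p x \<longleftrightarrow> (\<exists>y. VE x y \<in> edges p)"

definition B2_EPG_rep :: "'v set \<Rightarrow> ('v \<Rightarrow> 'v \<Rightarrow> bool) \<Rightarrow> ('v \<Rightarrow> path2) \<Rightarrow> bool" where
  "B2_EPG_rep V E P \<longleftrightarrow>
     (\<forall>u\<in>V. valid_path2 (P u)) \<and>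
     (\<forall>u\<in>V. \<forall>v\<in>V. u \<noteq> v \<longrightarrow> (E u v \<longleftrightarrow> edges (P u) \<inter> edges (P v) \<noteq> {}))"

definition simple_graph :: "'v set \<Rightarrow> ('v \<Rightarrow> 'v \<Rightarrow> bool) \<Rightarrow> bool" where
  "simple_graph V E \<longleftrightarrow> finite V \<and> (\<forall>u v. E u v \<longrightarrow> E v u) \<and> (\<forall>u. \<not> E u u)"

definition is_clique :: "'v set \<Rightarrow> ('v \<Rightarrow> 'v \<Rightarrow> bool) \<Rightarrow> 'v set \<Rightarrow> bool" where
  "is_clique V E X \<longleftrightarrow> X \<subseteq> V \<and> (\<forall>u\<in>X. \<forall>v\<in>X. u \<noteq> v \<longrightarrow> E u v)"

end

theory Submission
  imports Defs
begin

fun urow :: "path2 \<Rightarrow> int" where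
  "urow (UPath x1 y1 x2 y2 y3) = y2" | "urow (ZPath _ _ _ _ _) = 0"
fun ucols :: "path2 \<Rightarrow> int set" where
  "ucols (UPath x1 y1 x2 y2 y3) = {x1,x2}" | "ucols (ZPath _ _ _ _ _) = {}"
fun zrows :: "path2 \<Rightarrow> int set" where
  "zrows (ZPath x1 y1 x2 y2 x3) = {y1,y2}" | "zrows (UPath _ _ _ _ _) = {}"
fun zcol :: "path2 \<Rightarrow> int" where
  "zcol (ZPath x1 y1 x2 y2 x3) = x2" | "zcol (UPath _ _ _ _ _) = 0"

lemma U_row: "valid_path2 p \<Longrightarrow> is_U p \<Longrightarrow> intersects_row p (urow p)"
proof (cases p)
  case (UPath x1 y1 x2 y2 y3)
  assume "valid_path2 p"
  then have "HE (min x1 x2) y2 \<in> hseg x1 x2 y2" using UPath by (auto simp: hseg_def)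
  then show ?thesis using UPath by (auto simp: intersects_row_def)
qed simp

lemma Z_col: "valid_path2 p \<Longrightarrow> is_Z p \<Longrightarrow> intersects_col p (zcol p)"
proof (cases p)
  case (ZPath x1 y1 x2 y2 x3)
  assume "valid_path2 p"
  then have "VE x2 (min y1 y2) \<in> vseg x2 y1 y2" using ZPath by (auto simp: vseg_def)
  then show ?thesis using ZPath by (auto simp: intersects_col_def)
qed simp

lemma UZ: "is_U p \<Longrightarrow> is_Z q \<Longrightarrow> edges p \<inter> edges q \<noteq> {} \<Longrightarrow>
   urow p \<in> zrows q \<or> zcol q \<in> ucols p"
  by (cases p; cases q) (auto simp: hseg_def vseg_def)

lemma UU: "is_U p \<Longrightarrow> is_U q \<Longrightarrow> edges p \<inter> edges q \<noteq> {} \<Longrightarrow> urow p \<noteq> urow q \<Longrightarrow>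
   ucols p \<inter> ucols q \<noteq> {}"
  by (cases p; cases q) (auto simp: hseg_def vseg_def)

lemma card_ucols: "finite (ucols p) \<and> card (ucols p) \<le> 2"
  by (cases p) (auto simp: card_insert_if)
lemma card_zrows: "finite (zrows p) \<and> card (zrows p) \<le> 2"
  by (cases p) (auto simp: card_insert_if)

lemma comb:
  fixes r c :: "nat \<Rightarrow> int" and A B :: "nat \<Rightarrow> int set"
  assumes ri: "inj_on r {..<4}" and ci: "inj_on c {..<4}"
    and A: "\<And>i. i < 4 \<Longrightarrow> finite (A i) \<and> card (A i) \<le> 2"
    and B: "\<And>j. j < 4 \<Longrightarrow> finite (B j) \<and> card (B j) \<le> 2"
    and H: "\<And>i j. i < 4 \<Longrightarrow> j < 4 \<Longrightarrow> r i \<in> B j \<or> c j \<in> A i"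
    and I: "\<And>i k. i < 4 \<Longrightarrow> k < 4 \<Longrightarrow> i \<noteq> k \<Longrightarrow> A i \<inter> A k \<noteq> {}"
  shows False
proof -
  have S1: "c j \<in> A i \<or> c j \<in> A k \<or> c j \<in> A l"
    if "j < 4" "i < 4" "k < 4" "l < 4" "i \<noteq> k" "i \<noteq> l" "k \<noteq> l" for i j k l
  proof (rule ccontr)
    assume "\<not> ?thesis"
    then have sub: "{r i, r k, r l} \<subseteq> B j" using H that by auto
    have "r i \<noteq> r k" "r i \<noteq> r l" "r k \<noteq> r l" using ri that by (auto dest: inj_onD)
    then have "card {r i, r k, r l} = 3" by auto
    moreover have "card {r i, r k, r l} \<le> card (B j)" using sub B[OF that(1)] card_mono by blast
    ultimately show False using B[OF that(1)] by simp
  qed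
  have c4: "card (c ` {..<4}) = 4" using ci by (simp add: card_image)
  have "card (c ` {..<4}) - card (A 0) \<le> card (c ` {..<4} - A 0)"
    using A[of 0] diff_card_le_card_Diff by auto
  then have "2 \<le> card (c ` {..<4} - A 0)" using c4 A[of 0] by arith
  then obtain T where T: "T \<subseteq> c ` {..<4} - A 0" "card T = 2" "finite T"
    by (meson obtain_subset_with_card_n)
  then obtain x y where xy: "T = {x, y}" "x \<noteq> y" by (meson card_2_iff)
  then obtain j1 j2 where j: "j1 < 4" "j2 < 4" "x = c j1" "y = c j2" "c j1 \<notin> A 0" "c j2 \<notin> A 0"
    using T by auto
  have P1: "c j \<in> A k \<or> c j \<in> A l" if "j < 4" "c j \<notin> A 0" "k \<in> {1,2,3}" "l \<in> {1,2,3}" "k \<noteq> l" for j k l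
    using S1[of j 0 k l] that by auto
  have a1: "c j1 \<in> A 1 \<or> c j1 \<in> A 2" using P1[OF j(1) j(5), of 1 2] by simp
  have a2: "c j1 \<in> A 1 \<or> c j1 \<in> A 3" using P1[OF j(1) j(5), of 1 3] by simp
  have a3: "c j1 \<in> A 2 \<or> c j1 \<in> A 3" using P1[OF j(1) j(5), of 2 3] by simp
  have b1: "c j2 \<in> A 1 \<or> c j2 \<in> A 2" using P1[OF j(2) j(6), of 1 2] by simp
  have b2: "c j2 \<in> A 1 \<or> c j2 \<in> A 3" using P1[OF j(2) j(6), of 1 3] by simp
  have b3: "c j2 \<in> A 2 \<or> c j2 \<in> A 3" using P1[OF j(2) j(6), of 2 3] by simp
  obtain k where k: "k \<in> {1,2,3::nat}" "c j1 \<in> A k" "c j2 \<in> A k"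
    using a1 a2 a3 b1 b2 b3 by blast
  have k4: "k < 4" "k \<noteq> 0" using k by auto
  have "{x, y} \<subseteq> A k" using k j by auto
  then have "A k = {x, y}" using A[OF k4(1)] xy(2)
    by (metis card_seteq card_2_iff xy(1) T(2) T(3))
  then show False using I[OF k4(1), of 0] k4 j by auto
qed

lemma four_elems:
  assumes "finite S" "4 \<le> card S"
  obtains r :: "nat \<Rightarrow> 'a" where "inj_on r {..<4}" "\<And>i. i < 4 \<Longrightarrow> r i \<in> S"
proof -
  obtain T where T: "T \<subseteq> S" "card T = 4" "finite T"
    using assms(2) by (meson obtain_subset_with_card_n)
  obtain h where "bij_betw h {0..<card T} T" using ex_bij_betw_nat_finite[OF T(3)] by blast
  then have "bij_betw h {..<4} T" using T(2) by (simp add: atLeast0LessThan)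
  then show ?thesis using that T(1) by (auto simp: bij_betw_def)
qed

theorem lemma10:
  fixes V :: "'v set" and E :: "'v \<Rightarrow> 'v \<Rightarrow> bool" and P :: "'v \<Rightarrow> path2" and X :: "'v set"
  assumes "simple_graph V E"
    and "B2_EPG_rep V E P"
    and "is_clique V E X"
  shows "(\<exists>R :: int set. finite R \<and> card R \<le> 3 \<and>
            (\<forall>u\<in>X. is_U (P u) \<longrightarrow> (\<exists>y\<in>R. intersects_row (P u) y)))
       \<or> (\<exists>C :: int set. finite C \<and> card C \<le> 3 \<and>
            (\<forall>u\<in>X. is_Z (P u) \<longrightarrow> (\<exists>x\<in>C. intersects_col (P u) x)))"
proof (rule ccontr)
  assume neg: "\<not> ?thesis"
  have finX: "finite X" using assms(1,3) by (auto simp: simple_graph_def is_clique_def intro: finite_subset)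
  have XV: "X \<subseteq> V" using assms(3) by (simp add: is_clique_def)
  have valid: "\<And>u. u \<in> X \<Longrightarrow> valid_path2 (P u)" using assms(2) XV by (auto simp: B2_EPG_rep_def)
  have inter: "\<And>u v. u \<in> X \<Longrightarrow> v \<in> X \<Longrightarrow> u \<noteq> v \<Longrightarrow> edges (P u) \<inter> edges (P v) \<noteq> {}"
    using assms(2,3) XV unfolding B2_EPG_rep_def is_clique_def by blast
  define RU where "RU = urow ` P ` {u\<in>X. is_U (P u)}"
  define CZ where "CZ = zcol ` P ` {u\<in>X. is_Z (P u)}"
  have fRU: "finite RU" "finite CZ" using finX by (auto simp: RU_def CZ_def)
  have "\<not> card RU \<le> 3"
  proof
    assume "card RU \<le> 3"
    moreover have "\<forall>u\<in>X. is_U (P u) \<longrightarrow> (\<exists>y\<in>RU. intersects_row (P u) y)"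
      using U_row valid unfolding RU_def by blast
    ultimately show False using neg fRU(1) by blast
  qed
  then have r4: "4 \<le> card RU" by simp
  obtain r :: "nat \<Rightarrow> int" where r: "inj_on r {..<4}" "\<And>i. i < 4 \<Longrightarrow> r i \<in> RU"
    using four_elems[OF fRU(1) r4] by blast
  have "\<not> card CZ \<le> 3"
  proof
    assume "card CZ \<le> 3"
    moreover have "\<forall>u\<in>X. is_Z (P u) \<longrightarrow> (\<exists>x\<in>CZ. intersects_col (P u) x)"
      using Z_col valid unfolding CZ_def by blast
    ultimately show False using neg fRU(2) by blast
  qed
  then have c4: "4 \<le> card CZ" by simp
  obtain c :: "nat \<Rightarrow> int" where c: "inj_on c {..<4}" "\<And>i. i < 4 \<Longrightarrow> c i \<in> CZ"
    using four_elems[OF fRU(2) c4] by blast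
  have "\<forall>i::nat. \<exists>u. i < 4 \<longrightarrow> u \<in> X \<and> is_U (P u) \<and> urow (P u) = r i"
  proof
    fix i :: nat
    show "\<exists>u. i < 4 \<longrightarrow> u \<in> X \<and> is_U (P u) \<and> urow (P u) = r i"
    proof (cases "i < 4")
      case True
      then have "r i \<in> RU" by (rule r(2))
      then obtain u where "u \<in> X" "is_U (P u)" "r i = urow (P u)" unfolding RU_def by auto
      then show ?thesis by auto
    qed auto
  qed
  then obtain u :: "nat \<Rightarrow> 'v" where u: "\<And>i. i < 4 \<Longrightarrow> u i \<in> X \<and> is_U (P (u i)) \<and> urow (P (u i)) = r i"
    by metis
  have "\<forall>i::nat. \<exists>z. i < 4 \<longrightarrow> z \<in> X \<and> is_Z (P z) \<and> zcol (P z) = c i"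
  proof
    fix i :: nat
    show "\<exists>z. i < 4 \<longrightarrow> z \<in> X \<and> is_Z (P z) \<and> zcol (P z) = c i"
    proof (cases "i < 4")
      case True
      then have "c i \<in> CZ" by (rule c(2))
      then obtain z where "z \<in> X" "is_Z (P z)" "c i = zcol (P z)" unfolding CZ_def by auto
      then show ?thesis by auto
    qed auto
  qed
  then obtain z :: "nat \<Rightarrow> 'v" where z: "\<And>i. i < 4 \<Longrightarrow> z i \<in> X \<and> is_Z (P (z i)) \<and> zcol (P (z i)) = c i"
    by metis
  have ri': "inj_on (\<lambda>i. urow (P (u i))) {..<4}" using r(1) u
    by (simp add: inj_on_def)
  have ci': "inj_on (\<lambda>i. zcol (P (z i))) {..<4}" using c(1) z
    by (simp add: inj_on_def)
  show False
  proof (rule comb[OF ri' ci', of "\<lambda>i. ucols (P (u i))" "\<lambda>j. zrows (P (z j))"])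
    show "\<And>i. finite (ucols (P (u i))) \<and> card (ucols (P (u i))) \<le> 2" by (rule card_ucols)
    show "\<And>i. finite (zrows (P (z i))) \<and> card (zrows (P (z i))) \<le> 2" by (rule card_zrows)
  next
    fix i j :: nat assume ij: "i < 4" "j < 4"
    have ne: "u i \<noteq> z j" using u[OF ij(1)] z[OF ij(2)] by (cases "P (u i)") auto
    show "urow (P (u i)) \<in> zrows (P (z j)) \<or> zcol (P (z j)) \<in> ucols (P (u i))"
      using UZ inter[OF _ _ ne] u[OF ij(1)] z[OF ij(2)] by blast
  next
    fix i k :: nat assume ik: "i < 4" "k < 4" "i \<noteq> k"
    have rne: "urow (P (u i)) \<noteq> urow (P (u k))" using ri' ik by (auto dest: inj_onD)
    then have ne: "u i \<noteq> u k" by auto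
    show "ucols (P (u i)) \<inter> ucols (P (u k)) \<noteq> {}"
      using UU[OF _ _ inter[OF _ _ ne] rne] u[OF ik(1)] u[OF ik(2)] by blast
  qed
qed

end
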